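(* Let $\mathcal{H}$ be a finite class of classifiers $h:\mathcal{X}\times\{-1,1\}\to\{0,1\}$ containing the two classifiers $\mathbf{1}[a=1]$ and $\mathbf{1}[a=-1]$. Let $(\hat\pi,\hat\lambda)$ be a $\nu$-approximate saddle point of the Lagrangian $\mathcal{L}$ over $\Delta(\mathcal{H})\times\Lambda$. Then $$err(\hat\pi,\mathcal{P})\le\mathrm{OPT}+2\nu\quad\text{and}\quad\forall j\in\{\pm1\}:\ \mathrm{FPR}_j(\hat\pi)-\mathrm{FPR}_{-j}(\hat\pi)\le\gamma+2\nu.$$
   Context: Given points $X_1,\dots,X_n$ (each $X_j=(\hat x_j,a_j)$), labels $Y_j\in\{0,1\}$ and nonnegative weights $w_j$ with $\sum_j w_j=1$, let $err(h,\mathcal{P})=\sum_{j=1}^n w_j\mathbf{1}\{h(X_j)\neq Y_j\}$ and $err(\pi,\mathcal{P})=\mathbb{E}_{h\sim\pi}[err(h,\mathcal{P})]$ for $\pi\in\Delta(\mathcal{H})$. Let $\mathcal{D}_E$ be a fixed empirical distribution of labeled examples $(\hat x,a,y)$ containing negative examples of both groups, and for $j\in\{\pm1\}$ let $\mathrm{FPR}_j(\pi)=\mathbb{E}_{h\sim\pi}[\Pr_{\mathcal{D}_E}(h(x)=1\mid a=j,y\text{ negative})]$. Fix $\gamma\ge0$. $\mathrm{OPT}=\min\{err(\pi,\mathcal{P}):\pi\in\Delta(\mathcal{H}),\ \mathrm{FPR}_j(\pi)-\mathrm{FPR}_{-j}(\pi)\le\gamma\ \forall j\in\{\pm1\}\}$.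 The Lagrangian is $\mathcal{L}(\pi,\lambda)=err(\pi,\mathcal{P})+\sum_{j\in\{\pm1\}}\lambda_j(\mathrm{FPR}_j(\pi)-\mathrm{FPR}_{-j}(\pi)-\gamma)$ for $\lambda\in\mathbb{R}^2_+$, and $\Lambda=\{\lambda\in\mathbb{R}^2_+:\|\lambda\|_1\le2\}$. $(\hat\pi,\hat\lambda)\in\Delta(\mathcal{H})\times\Lambda$ is a $\nu$-approximate saddle point if $\mathcal{L}(\hat\pi,\hat\lambda)\le\mathcal{L}(g,\hat\lambda)+\nu$ for all $g\in\Delta(\mathcal{H})$ and $\mathcal{L}(\hat\pi,\hat\lambda)\ge\mathcal{L}(\hat\pi,\lambda)-\nu$ for all $\lambda\in\Lambda$. *)

theory Defs
  imports Main "HOL-Analysis.Analysis"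
begin

text \<open>Classifiers map a point (xhat, a) with group a in {-1,1} to {0,1}, encoded as bool
  (True = label 1). Labels Y are bool as well (True = 1, False = negative).\<close>

type_synonym 'x clf = "'x \<times> int \<Rightarrow> bool"

definition DeltaH :: "'x clf set \<Rightarrow> ('x clf \<Rightarrow> real) set" where
  "DeltaH H = {p. (\<forall>h\<in>H. 0 \<le> p h) \<and> (\<forall>h. h \<notin> H \<longrightarrow> p h = 0) \<and> sum p H = 1}"

definition err_h :: "nat \<Rightarrow> (nat \<Rightarrow> 'x \<times> int) \<Rightarrow> (nat \<Rightarrow> bool) \<Rightarrow> (nat \<Rightarrow> real) \<Rightarrow> 'x clf \<Rightarrow> real" where
  "err_h n Xs Y w h = (\<Sum>j<n. w j * (if h (Xs j) \<noteq> Y j then 1 else 0))"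

definition err_pi :: "'x clf set \<Rightarrow> nat \<Rightarrow> (nat \<Rightarrow> 'x \<times> int) \<Rightarrow> (nat \<Rightarrow> bool) \<Rightarrow> (nat \<Rightarrow> real)
    \<Rightarrow> ('x clf \<Rightarrow> real) \<Rightarrow> real" where
  "err_pi H n Xs Y w p = (\<Sum>h\<in>H. p h * err_h n Xs Y w h)"

text \<open>The empirical distribution D_E is the uniform distribution over a finite sample E (list,
  repetitions allowed) of labeled examples (xhat, a, y); y = False means negative.\<close>
definition fpr_h :: "('x \<times> int \<times> bool) list \<Rightarrow> int \<Rightarrow> 'x clf \<Rightarrow> real" where
  "fpr_h E j h = real (length (filter (\<lambda>(x,a,y). a = j \<and> \<not> y \<and> h (x,a)) E))
                / real (length (filter (\<lambda>(x,a,y). a = j \<and> \<not> y) E))"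

definition FPR :: "'x clf set \<Rightarrow> ('x \<times> int \<times> bool) list \<Rightarrow> int \<Rightarrow> ('x clf \<Rightarrow> real) \<Rightarrow> real" where
  "FPR H E j p = (\<Sum>h\<in>H. p h * fpr_h E j h)"

text \<open>Multipliers lambda in R^2_+ are pairs (lambda_1, lambda_{-1}).\<close>
definition Lagr :: "'x clf set \<Rightarrow> nat \<Rightarrow> (nat \<Rightarrow> 'x \<times> int) \<Rightarrow> (nat \<Rightarrow> bool) \<Rightarrow> (nat \<Rightarrow> real)
    \<Rightarrow> ('x \<times> int \<times> bool) list \<Rightarrow> real \<Rightarrow> ('x clf \<Rightarrow> real) \<Rightarrow> real \<times> real \<Rightarrow> real" where
  "Lagr H n Xs Y w E \<gamma> p l = err_pi H n Xs Y w p
     + fst l * (FPR H E 1 p - FPR H E (-1) p - \<gamma>)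
     + snd l * (FPR H E (-1) p - FPR H E 1 p - \<gamma>)"

definition Lambda_set :: "(real \<times> real) set" where
  "Lambda_set = {l. 0 \<le> fst l \<and> 0 \<le> snd l \<and> fst l + snd l \<le> 2}"

definition OPT :: "'x clf set \<Rightarrow> nat \<Rightarrow> (nat \<Rightarrow> 'x \<times> int) \<Rightarrow> (nat \<Rightarrow> bool) \<Rightarrow> (nat \<Rightarrow> real)
    \<Rightarrow> ('x \<times> int \<times> bool) list \<Rightarrow> real \<Rightarrow> real" where
  "OPT H n Xs Y w E \<gamma> = Inf {err_pi H n Xs Y w p | p. p \<in> DeltaH H
      \<and> FPR H E 1 p - FPR H E (-1) p \<le> \<gamma> \<and> FPR H E (-1) p - FPR H E 1 p \<le> \<gamma>}"

definition approx_saddle :: "'x clf set \<Rightarrow> nat \<Rightarrow> (nat \<Rightarrow> 'x \<times> int) \<Rightarrow> (nat \<Rightarrow> bool) \<Rightarrow> (nat \<Rightarrow> real)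
    \<Rightarrow> ('x \<times> int \<times> bool) list \<Rightarrow> real \<Rightarrow> real \<Rightarrow> ('x clf \<Rightarrow> real) \<Rightarrow> real \<times> real \<Rightarrow> bool" where
  "approx_saddle H n Xs Y w E \<gamma> \<nu> p l \<longleftrightarrow> p \<in> DeltaH H \<and> l \<in> Lambda_set
     \<and> (\<forall>g\<in>DeltaH H. Lagr H n Xs Y w E \<gamma> p l \<le> Lagr H n Xs Y w E \<gamma> g l + \<nu>)
     \<and> (\<forall>l'\<in>Lambda_set. Lagr H n Xs Y w E \<gamma> p l \<ge> Lagr H n Xs Y w E \<gamma> p l' - \<nu>)"

end

theory Submission
  imports Defs
begin

lemma fpr_h_bounds: "0 \<le> fpr_h E j h \<and> fpr_h E j h \<le> 1"
proof -
  define P where "P = (\<lambda>(x,a,y). a = j \<and> \<not> y \<and> h (x,a))"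
  define Q where "Q = (\<lambda>(x::'a,a::int,y::bool). a = j \<and> \<not> y)"
  have "filter P (filter Q E) = filter (\<lambda>x. Q x \<and> P x) E" by (rule filter_filter)
  also have "(\<lambda>x. Q x \<and> P x) = P" unfolding P_def Q_def by (rule ext) auto
  finally have "length (filter P E) = length (filter P (filter Q E))" by simp
  also have "\<dots> \<le> length (filter Q E)" by (rule length_filter_le)
  finally have le: "real (length (filter P E)) \<le> real (length (filter Q E))" by simp
  have "real (length (filter P E)) / real (length (filter Q E)) \<le> 1"
  proof (cases "length (filter Q E) = 0")
    case True then show ?thesis by simp
  next
    case False then show ?thesis using le by (simp add: divide_le_eq_1)
  qed
  moreover have "0 \<le> real (length (filter P E)) / real (length (filter Q E))" by simp
  ultimately show ?thesis unfolding fpr_h_def P_def Q_def by simp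
qed

lemma sum_delta_real: "finite H \<Longrightarrow> h \<in> H \<Longrightarrow> (\<Sum>g\<in>H. (if g = h then 1 else 0) * f g) = (f h :: real)"
proof -
  assume fin: "finite H" and hH: "h \<in> H"
  have "(\<Sum>g\<in>H. (if g = h then 1 else 0) * f g) = (\<Sum>g\<in>H. if g = h then f g else 0)"
    by (rule sum.cong) auto
  also have "\<dots> = f h" using fin hH by (simp add: sum.delta)
  finally show ?thesis .
qed

lemma err_h_bounds:
  assumes "\<forall>j<n. 0 \<le> w j" "(\<Sum>j<n. w j) = 1"
  shows "0 \<le> err_h n Xs Y w h \<and> err_h n Xs Y w h \<le> 1"
proof -
  have "0 \<le> err_h n Xs Y w h" unfolding err_h_def using assms by (auto intro: sum_nonneg)
  moreover have "err_h n Xs Y w h \<le> (\<Sum>j<n. w j)" unfolding err_h_def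
    using assms by (intro sum_mono) auto
  ultimately show ?thesis using assms by simp
qed

lemma delta_in: "h \<in> H \<Longrightarrow> finite H \<Longrightarrow> (\<lambda>g. if g = h then 1 else 0) \<in> DeltaH H"
  unfolding DeltaH_def by auto

lemma err_delta: "h \<in> H \<Longrightarrow> finite H \<Longrightarrow> err_pi H n Xs Y w (\<lambda>g. if g = h then 1 else 0) = err_h n Xs Y w h"
  unfolding err_pi_def by (rule sum_delta_real)

lemma FPR_delta: "h \<in> H \<Longrightarrow> finite H \<Longrightarrow> FPR H E j (\<lambda>g. if g = h then 1 else 0) = fpr_h E j h"
  unfolding FPR_def by (rule sum_delta_real)

lemma FPR_bounds:
  assumes "p \<in> DeltaH H" "finite H"
  shows "0 \<le> FPR H E j p \<and> FPR H E j p \<le> 1"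
proof -
  have pn: "\<forall>h\<in>H. 0 \<le> p h" and ps: "sum p H = 1" using assms unfolding DeltaH_def by auto
  have "0 \<le> FPR H E j p" unfolding FPR_def
    by (intro sum_nonneg mult_nonneg_nonneg) (use pn fpr_h_bounds in auto)
  moreover have "FPR H E j p \<le> sum p H" unfolding FPR_def
  proof (intro sum_mono)
    fix h assume "h \<in> H"
    thus "p h * fpr_h E j h \<le> p h" using pn fpr_h_bounds[of E j h] by (simp add: mult_left_le)
  qed
  ultimately show ?thesis using ps by simp
qed

lemma err_pi_nonneg:
  assumes "p \<in> DeltaH H" "\<forall>j<n. 0 \<le> w j" "(\<Sum>j<n. w j) = 1"
  shows "0 \<le> err_pi H n Xs Y w p"
  unfolding err_pi_def
  by (intro sum_nonneg mult_nonneg_nonneg) (use assms err_h_bounds[OF assms(2,3)] in \<open>auto simp: DeltaH_def\<close>)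

lemma final_ineq:
  fixes m D t \<gamma> \<nu> :: real
  assumes "(2 - m) * t \<le> \<nu>" "m * (D + 1) \<le> 1 + \<nu>" "t = D - \<gamma>" "0 \<le> \<gamma>" "D \<le> 1"
    "0 \<le> \<nu>" "m \<le> 2"
  shows "t \<le> 2 * \<nu>"
proof (rule ccontr)
  assume c: "\<not> t \<le> 2 * \<nu>"
  show False
  proof (cases "\<nu> \<ge> 1/2")
    case True then show ?thesis using assms c by linarith
  next
    case False
    have Dp: "D + 1 > 0" using assms c by linarith
    have "(2 - m) * t * (D + 1) \<le> \<nu> * (D + 1)" using assms(1) Dp by (simp add: mult_right_mono)
    moreover have "t * (m * (D + 1)) \<le> t * (1 + \<nu>)" using assms(2) c assms(6)
      by (intro mult_left_mono) auto
    ultimately have k: "t * (2*D + 1 - \<nu>) \<le> \<nu> * (D + 1)" by (simp add: algebra_simps)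
    have "2*\<nu> * (2*D + 1 - \<nu>) \<le> t * (2*D + 1 - \<nu>)" using c False assms
      by (intro mult_right_mono) auto
    with k have "2*\<nu> * (2*D + 1 - \<nu>) \<le> \<nu> * (D + 1)" by linarith
    hence "\<nu> * (3*D + 1 - 2*\<nu>) \<le> 0" by (simp add: algebra_simps)
    hence k2: "\<nu> * (3*D + 1 - 2*\<nu>) \<le> 0" .
    show False
    proof (cases "\<nu> = 0")
      case True
      hence "t * (2*D + 1) \<le> 0" using k by simp
      moreover have "t * (2*D + 1) > 0" using c True assms by (intro mult_pos_pos) auto
      ultimately show False by linarith
    next
      case nz: False
      hence "\<nu> > 0" using assms by linarith
      with k2 have "3*D + 1 - 2*\<nu> \<le> 0" by (simp add: mult_le_0_iff)
      thus False using False c assms by linarith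
    qed
  qed
qed

theorem lemma10:
  fixes H :: "'x clf set" and n :: nat and Xs :: "nat \<Rightarrow> 'x \<times> int" and Y :: "nat \<Rightarrow> bool"
    and w :: "nat \<Rightarrow> real" and E :: "('x \<times> int \<times> bool) list"
    and \<gamma> \<nu> :: real and p :: "'x clf \<Rightarrow> real" and l :: "real \<times> real"
  assumes finH: "finite H"
    and H1: "(\<lambda>(x, a). a = 1) \<in> H" and H2: "(\<lambda>(x, a). a = -1) \<in> H"
    and groups: "\<forall>j<n. snd (Xs j) \<in> {-1, 1}"
    and wnn: "\<forall>j<n. 0 \<le> w j" and wsum: "(\<Sum>j<n. w j) = 1"
    and Egroups: "\<forall>(x, a, y) \<in> set E. a \<in> {-1, 1}"
    and Eneg1: "\<exists>x. (x, 1, False) \<in> set E" and Eneg2: "\<exists>x. (x, -1, False) \<in> set E"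
    and gam: "0 \<le> \<gamma>"
    and saddle: "approx_saddle H n Xs Y w E \<gamma> \<nu> p l"
  shows "err_pi H n Xs Y w p \<le> OPT H n Xs Y w E \<gamma> + 2 * \<nu>
    \<and> FPR H E 1 p - FPR H E (-1) p \<le> \<gamma> + 2 * \<nu>
    \<and> FPR H E (-1) p - FPR H E 1 p \<le> \<gamma> + 2 * \<nu>"
proof -
  define h1 :: "'x clf" where "h1 = (\<lambda>(x, a). a = 1)"
  define h2 :: "'x clf" where "h2 = (\<lambda>(x, a). a = -1)"
  have h1H: "h1 \<in> H" and h2H: "h2 \<in> H" using H1 H2 h1_def h2_def by auto
  obtain x1 where x1: "(x1, 1, False) \<in> set E" using Eneg1 by auto
  obtain x2 where x2: "(x2, -1, False) \<in> set E" using Eneg2 by auto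
  have h12: "h1 \<noteq> h2" unfolding h1_def h2_def by (metis case_prod_conv one_neq_neg_one)
  have pD: "p \<in> DeltaH H" and lL: "l \<in> Lambda_set"
    and S1: "\<forall>g\<in>DeltaH H. Lagr H n Xs Y w E \<gamma> p l \<le> Lagr H n Xs Y w E \<gamma> g l + \<nu>"
    and S2: "\<forall>l'\<in>Lambda_set. Lagr H n Xs Y w E \<gamma> p l \<ge> Lagr H n Xs Y w E \<gamma> p l' - \<nu>"
    using saddle unfolding approx_saddle_def by auto
  have l1: "0 \<le> fst l" and l2: "0 \<le> snd l" and l12: "fst l + snd l \<le> 2"
    using lL unfolding Lambda_set_def by auto
  have nu: "0 \<le> \<nu>" using S2 lL by fastforce
  have f11: "fpr_h E 1 h1 = 1"
  proof -
    have eq: "filter (\<lambda>(x,a,y). a = 1 \<and> \<not> y \<and> h1 (x,a)) E = filter (\<lambda>(x,a,y). a = 1 \<and> \<not> y) E"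
      unfolding h1_def by (rule filter_cong) auto
    have "filter (\<lambda>(x,a,y). a = (1::int) \<and> \<not> y) E \<noteq> []"
    proof
      assume b: "filter (\<lambda>(x,a,y). a = (1::int) \<and> \<not> y) E = []"
      have "(x1, 1::int, False) \<in> set (filter (\<lambda>(x,a,y). a = (1::int) \<and> \<not> y) E)" using x1 by simp
      thus False using b by simp
    qed
    thus ?thesis unfolding fpr_h_def eq by simp
  qed
  have f22: "fpr_h E (-1) h2 = 1"
  proof -
    have eq: "filter (\<lambda>(x,a,y). a = -1 \<and> \<not> y \<and> h2 (x,a)) E = filter (\<lambda>(x,a,y). a = -1 \<and> \<not> y) E"
      unfolding h2_def by (rule filter_cong) auto
    have "filter (\<lambda>(x,a,y). a = (-1::int) \<and> \<not> y) E \<noteq> []"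
    proof
      assume b: "filter (\<lambda>(x,a,y). a = (-1::int) \<and> \<not> y) E = []"
      have "(x2, -1::int, False) \<in> set (filter (\<lambda>(x,a,y). a = (-1::int) \<and> \<not> y) E)" using x2 by simp
      thus False using b by simp
    qed
    thus ?thesis unfolding fpr_h_def eq by simp
  qed
  have f12: "fpr_h E (-1) h1 = 0"
  proof -
    have eq: "filter (\<lambda>(x,a,y). a = -1 \<and> \<not> y \<and> h1 (x,a)) E = []"
      unfolding h1_def by (simp add: filter_empty_conv split_beta)
    show ?thesis unfolding fpr_h_def eq by simp
  qed
  have f21: "fpr_h E 1 h2 = 0"
  proof -
    have eq: "filter (\<lambda>(x,a,y). a = 1 \<and> \<not> y \<and> h2 (x,a)) E = []"
      unfolding h2_def by (simp add: filter_empty_conv split_beta)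
    show ?thesis unfolding fpr_h_def eq by simp
  qed
  define A where "A = err_pi H n Xs Y w p"
  define F1 where "F1 = FPR H E 1 p"
  define F2 where "F2 = FPR H E (-1) p"
  have A0: "0 \<le> A" unfolding A_def using err_pi_nonneg[OF pD wnn wsum] .
  have F1b: "0 \<le> F1 \<and> F1 \<le> 1" unfolding F1_def using FPR_bounds[OF pD finH] .
  have F2b: "0 \<le> F2 \<and> F2 \<le> 1" unfolding F2_def using FPR_bounds[OF pD finH] .
  have Lp: "Lagr H n Xs Y w E \<gamma> p l' = A + fst l' * (F1 - F2 - \<gamma>) + snd l' * (F2 - F1 - \<gamma>)" for l'
    unfolding Lagr_def A_def F1_def F2_def by simp
  have Ldelta: "Lagr H n Xs Y w E \<gamma> (\<lambda>g. if g = h then 1 else 0) l =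
     err_h n Xs Y w h + fst l * (fpr_h E 1 h - fpr_h E (-1) h - \<gamma>) + snd l * (fpr_h E (-1) h - fpr_h E 1 h - \<gamma>)"
    if "h \<in> H" for h
    unfolding Lagr_def using err_delta[OF that finH] FPR_delta[OF that finH] by simp
  have eh1: "err_h n Xs Y w h1 \<le> 1" and eh2: "err_h n Xs Y w h2 \<le> 1"
    using err_h_bounds[OF wnn wsum] by auto
  have B1: "A + fst l * (F1 - F2 - \<gamma>) + snd l * (F2 - F1 - \<gamma>) \<le>
     err_h n Xs Y w h2 + fst l * (0 - 1 - \<gamma>) + snd l * (1 - 0 - \<gamma>) + \<nu>"
  proof -
    have "Lagr H n Xs Y w E \<gamma> p l \<le> Lagr H n Xs Y w E \<gamma> (\<lambda>g. if g = h2 then 1 else 0) l + \<nu>"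
      using S1 delta_in[OF h2H finH] by blast
    thus ?thesis unfolding Ldelta[OF h2H] Lp f21 f22 .
  qed
  have B2: "A + fst l * (F1 - F2 - \<gamma>) + snd l * (F2 - F1 - \<gamma>) \<le>
     err_h n Xs Y w h1 + fst l * (1 - 0 - \<gamma>) + snd l * (0 - 1 - \<gamma>) + \<nu>"
  proof -
    have "Lagr H n Xs Y w E \<gamma> p l \<le> Lagr H n Xs Y w E \<gamma> (\<lambda>g. if g = h1 then 1 else 0) l + \<nu>"
      using S1 delta_in[OF h1H finH] by blast
    thus ?thesis unfolding Ldelta[OF h1H] Lp f11 f12 .
  qed
  have C1: "A + fst l * (F1 - F2 - \<gamma>) + snd l * (F2 - F1 - \<gamma>) \<ge> A + 2 * (F1 - F2 - \<gamma>) - \<nu>"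
    using S2[rule_format, of "(2,0)"] Lp unfolding Lambda_set_def by simp
  have C2: "A + fst l * (F1 - F2 - \<gamma>) + snd l * (F2 - F1 - \<gamma>) \<ge> A + 2 * (F2 - F1 - \<gamma>) - \<nu>"
    using S2[rule_format, of "(0,2)"] Lp unfolding Lambda_set_def by simp
  have C0: "A + fst l * (F1 - F2 - \<gamma>) + snd l * (F2 - F1 - \<gamma>) \<ge> A - \<nu>"
    using S2[rule_format, of "(0,0)"] Lp unfolding Lambda_set_def by simp
  have P1: "F1 - F2 \<le> \<gamma> + 2 * \<nu>"
  proof -
    define m where "m = fst l - snd l"
    have a: "(2 - m) * (F1 - F2 - \<gamma>) \<le> \<nu>"
    proof -
      have "(2 - m) * (F1 - F2 - \<gamma>) = 2 * (F1 - F2 - \<gamma>) - (fst l * (F1 - F2 - \<gamma>) + snd l * (F2 - F1 - \<gamma>)) - 2 * snd l * \<gamma>"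
        unfolding m_def by (simp add: algebra_simps)
      also have "\<dots> \<le> \<nu>" using C1 l2 gam by (smt (verit) mult_nonneg_nonneg)
      finally show ?thesis .
    qed
    have b: "m * ((F1 - F2) + 1) \<le> 1 + \<nu>"
    proof -
      have "m * ((F1 - F2) + 1) = (fst l * (F1 - F2 - \<gamma>) + snd l * (F2 - F1 - \<gamma>)) - (fst l * (0 - 1 - \<gamma>) + snd l * (1 - 0 - \<gamma>))"
        unfolding m_def by (simp add: algebra_simps)
      thus ?thesis using B1 A0 eh2 by linarith
    qed
    have "F1 - F2 - \<gamma> \<le> 2 * \<nu>"
      by (rule final_ineq[OF a b refl gam]) (use F1b F2b nu l1 l2 l12 m_def in auto)
    thus ?thesis by simp
  qed
  have P2: "F2 - F1 \<le> \<gamma> + 2 * \<nu>"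
  proof -
    define m where "m = snd l - fst l"
    have a: "(2 - m) * (F2 - F1 - \<gamma>) \<le> \<nu>"
    proof -
      have "(2 - m) * (F2 - F1 - \<gamma>) = 2 * (F2 - F1 - \<gamma>) - (fst l * (F1 - F2 - \<gamma>) + snd l * (F2 - F1 - \<gamma>)) - 2 * fst l * \<gamma>"
        unfolding m_def by (simp add: algebra_simps)
      also have "\<dots> \<le> \<nu>" using C2 l1 gam by (smt (verit) mult_nonneg_nonneg)
      finally show ?thesis .
    qed
    have b: "m * ((F2 - F1) + 1) \<le> 1 + \<nu>"
    proof -
      have "m * ((F2 - F1) + 1) = (fst l * (F1 - F2 - \<gamma>) + snd l * (F2 - F1 - \<gamma>)) - (fst l * (1 - 0 - \<gamma>) + snd l * (0 - 1 - \<gamma>))"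
        unfolding m_def by (simp add: algebra_simps)
      thus ?thesis using B2 A0 eh1 by linarith
    qed
    have "F2 - F1 - \<gamma> \<le> 2 * \<nu>"
      by (rule final_ineq[OF a b refl gam]) (use F1b F2b nu l1 l2 l12 m_def in auto)
    thus ?thesis by simp
  qed
  define S where "S = {err_pi H n Xs Y w g | g. g \<in> DeltaH H
      \<and> FPR H E 1 g - FPR H E (-1) g \<le> \<gamma> \<and> FPR H E (-1) g - FPR H E 1 g \<le> \<gamma>}"
  define g0 where "g0 = (\<lambda>h. (if h = h1 then 1/2 else 0) + (if h = h2 then 1/2 else (0::real)))"
  have g0D: "g0 \<in> DeltaH H"
    unfolding DeltaH_def g0_def using h1H h2H h12 finH by (auto simp: sum.distrib)
  have FPRg0: "FPR H E j g0 = fpr_h E j h1 / 2 + fpr_h E j h2 / 2" for j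
  proof -
    have "FPR H E j g0 = (\<Sum>h\<in>H. (1/2) * ((if h = h1 then 1 else 0) * fpr_h E j h) + (1/2) * ((if h = h2 then 1 else 0) * fpr_h E j h))"
      unfolding FPR_def g0_def by (rule sum.cong) auto
    also have "\<dots> = (1/2) * (\<Sum>h\<in>H. (if h = h1 then 1 else 0) * fpr_h E j h) + (1/2) * (\<Sum>h\<in>H. (if h = h2 then 1 else 0) * fpr_h E j h)"
      by (simp add: sum.distrib sum_distrib_left)
    also have "\<dots> = fpr_h E j h1 / 2 + fpr_h E j h2 / 2"
      using sum_delta_real[OF finH h1H] sum_delta_real[OF finH h2H] by simp
    finally show ?thesis .
  qed
  have "err_pi H n Xs Y w g0 \<in> S" unfolding S_def
    using g0D FPRg0[of 1] FPRg0[of "-1"] f11 f12 f21 f22 gam by auto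
  hence Sne: "S \<noteq> {}" by auto
  have "A - 2 * \<nu> \<le> s" if "s \<in> S" for s
  proof -
    obtain g where g: "s = err_pi H n Xs Y w g" "g \<in> DeltaH H"
      "FPR H E 1 g - FPR H E (-1) g \<le> \<gamma>" "FPR H E (-1) g - FPR H E 1 g \<le> \<gamma>"
      using \<open>s \<in> S\<close> unfolding S_def by auto
    have "Lagr H n Xs Y w E \<gamma> p l \<le> Lagr H n Xs Y w E \<gamma> g l + \<nu>" using S1 g(2) by auto
    moreover have "Lagr H n Xs Y w E \<gamma> g l \<le> s"
    proof -
      have "fst l * (FPR H E 1 g - FPR H E (-1) g - \<gamma>) \<le> 0"
        using l1 g(3) by (simp add: mult_nonneg_nonpos)
      moreover have "snd l * (FPR H E (-1) g - FPR H E 1 g - \<gamma>) \<le> 0"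
        using l2 g(4) by (simp add: mult_nonneg_nonpos)
      ultimately show ?thesis unfolding Lagr_def g(1) by linarith
    qed
    ultimately show ?thesis using C0 Lp[of l] by linarith
  qed
  hence "A - 2 * \<nu> \<le> Inf S" using Sne by (intro cInf_greatest) auto
  hence "A \<le> OPT H n Xs Y w E \<gamma> + 2 * \<nu>" unfolding OPT_def S_def by simp
  thus ?thesis using P1 P2 unfolding A_def F1_def F2_def by simp
qed

end
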